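(* Let $S$ be a countable discrete inverse semigroup that satisfies the F\o lner condition but not the proper F\o lner condition. Then $S$ has a minimal projection.
   Context: Inverse semigroup: each $s$ has a unique $s^*$ with $ss^*s=s$, $s^*ss^*=s^*$; projections are elements of $E(S)=\{s^*s\}$, ordered by $e\le f\iff ef=e$; $e_0\in E(S)$ is minimal if $f\le e_0$ implies $f=e_0$. $S$ satisfies the F\o lner condition if for every $\varepsilon>0$ and finite $\mathcal F\subseteq S$ there is a finite non-empty $F\subseteq S$ with $|sF\cup F|\le(1+\varepsilon)|F|$ for all $s\in\mathcal F$; it satisfies the proper F\o lner condition if in addition, for any finite $A\subseteq S$, $F$ can be chosen with $A\subseteq F$. *)

theory Defs
  imports Complex_Main "HOL-Library.Countable_Set"
begin

definition inverse_semigroup :: "'a::semigroup_mult itself \<Rightarrow> bool" where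
  "inverse_semigroup _ \<longleftrightarrow> (\<forall>s::'a. \<exists>!t. s * t * s = s \<and> t * s * t = t)"

definition star :: "'a::semigroup_mult \<Rightarrow> 'a" where
  "star s = (THE t. s * t * s = s \<and> t * s * t = t)"

definition projections :: "'a::semigroup_mult itself \<Rightarrow> 'a set" where
  "projections _ = {star s * s | s. True}"

definition proj_le :: "'a::semigroup_mult \<Rightarrow> 'a \<Rightarrow> bool" where
  "proj_le e f \<longleftrightarrow> e * f = e"

definition minimal_projection :: "'a::semigroup_mult \<Rightarrow> bool" where
  "minimal_projection e0 \<longleftrightarrow> e0 \<in> projections TYPE('a) \<and>
     (\<forall>f \<in> projections TYPE('a). proj_le f e0 \<longrightarrow> f = e0)"

definition folner :: "'a::semigroup_mult itself \<Rightarrow> bool" where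
  "folner _ \<longleftrightarrow> (\<forall>(\<epsilon>::real)>0. \<forall>\<F>::'a set. finite \<F> \<longrightarrow>
     (\<exists>F::'a set. finite F \<and> F \<noteq> {} \<and>
        (\<forall>s\<in>\<F>. real (card ((\<lambda>x. s * x) ` F \<union> F)) \<le> (1 + \<epsilon>) * real (card F))))"

definition proper_folner :: "'a::semigroup_mult itself \<Rightarrow> bool" where
  "proper_folner _ \<longleftrightarrow> (\<forall>(\<epsilon>::real)>0. \<forall>\<F>::'a set. \<forall>A::'a set. finite \<F> \<longrightarrow> finite A \<longrightarrow>
     (\<exists>F::'a set. finite F \<and> F \<noteq> {} \<and> A \<subseteq> F \<and>
        (\<forall>s\<in>\<F>. real (card ((\<lambda>x. s * x) ` F \<union> F)) \<le> (1 + \<epsilon>) * real (card F))))"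

end

theory Submission
  imports Defs
begin

locale invs =
  assumes inv: "inverse_semigroup TYPE('a::semigroup_mult)"
begin

lemma star_prop: "(s::'a) * star s * s = s \<and> star s * s * star s = star s"
proof -
  have "\<exists>!t. s * t * s = s \<and> t * s * t = t" using inv unfolding inverse_semigroup_def by blast
  then show ?thesis unfolding star_def by (rule theI')
qed

lemma star_uniq: "(s::'a) * t * s = s \<Longrightarrow> t * s * t = t \<Longrightarrow> t = star s"
proof -
  assume a: "s * t * s = s" "t * s * t = t"
  have u: "\<exists>!t. s * t * s = s \<and> t * s * t = t" using inv unfolding inverse_semigroup_def by blast
  show ?thesis using u a star_prop[of s] by blast
qed

lemma star_star: "star (star (s::'a)) = s"
  using star_prop[of s] star_uniq[of "star s" s] by simp

lemma star_idem: "(e::'a) * e = e \<Longrightarrow> star e = e"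
  using star_uniq[of e e] by simp

lemma idem_prod: assumes e: "(e::'a) * e = e" and f: "f * f = f" shows "(e * f) * (e * f) = e * f"
proof -
  define x where "x = star (e * f)"
  have x1: "e * f * x * (e * f) = e * f" and x2: "x * (e * f) * x = x"
    using star_prop[of "e*f"] unfolding x_def by auto
  have ee: "e * (e * z) = e * z" for z using e by (metis mult.assoc)
  have ff: "f * (f * z) = f * z" for z using f by (metis mult.assoc)
  have a: "e * f * (f * x * e) * (e * f) = e * f"
    using x1 by (simp add: mult.assoc ee ff)
  have b: "f * x * e * (e * f) * (f * x * e) = f * x * e"
  proof -
    have "f * x * e * (e * f) * (f * x * e) = f * (x * (e * f) * x) * e"
      by (simp add: mult.assoc ee ff)
    also have "\<dots> = f * x * e" using x2 by (simp add: mult.assoc)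
    finally show ?thesis .
  qed
  have fxe: "f * x * e = x" using star_uniq[OF a b] unfolding x_def by simp
  have "x * x = x"
  proof -
    have "x * x = f * x * e * (f * x * e)" using fxe by simp
    also have "\<dots> = f * (x * (e * f) * x) * e" by (simp add: mult.assoc)
    also have "\<dots> = x" using x2 fxe by (simp add: mult.assoc)
    finally show ?thesis .
  qed
  then have "star x = x" by (rule star_idem)
  then have "e * f = x" using star_star[of "e*f"] unfolding x_def by simp
  then show ?thesis using \<open>x * x = x\<close> by simp
qed

lemma idem_comm: assumes e: "(e::'a) * e = e" and f: "f * f = f" shows "e * f = f * e"
proof -
  have ef: "(e * f) * (e * f) = e * f" by (rule idem_prod[OF e f])
  have fe: "(f * e) * (f * e) = f * e" by (rule idem_prod[OF f e])
  have ee: "e * (e * z) = e * z" for z using e by (metis mult.assoc)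
  have ff: "f * (f * z) = f * z" for z using f by (metis mult.assoc)
  have a: "e * f * (f * e) * (e * f) = e * f"
  proof -
    have "e * f * (f * e) * (e * f) = (e * f) * (e * f)" by (simp add: mult.assoc ee ff)
    then show ?thesis using ef by simp
  qed
  have b: "f * e * (e * f) * (f * e) = f * e"
  proof -
    have "f * e * (e * f) * (f * e) = (f * e) * (f * e)" by (simp add: mult.assoc ee ff)
    then show ?thesis using fe by simp
  qed
  have "f * e = star (e * f)" by (rule star_uniq[OF a b])
  also have "\<dots> = e * f" by (rule star_idem[OF ef])
  finally show ?thesis by simp
qed

lemma proj_idem: "e \<in> projections TYPE('a) \<Longrightarrow> (e::'a) * e = e"
proof -
  assume "e \<in> projections TYPE('a)"
  then obtain s where "e = star s * s" unfolding projections_def by blast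
  moreover have "star s * s * star s = star s" using star_prop by blast
  ultimately show ?thesis by (metis mult.assoc)
qed

end

theorem mainTheorem12:
  assumes "inverse_semigroup TYPE('a::semigroup_mult)"
    and "countable (UNIV :: 'a set)"
    and "folner TYPE('a)"
    and "\<not> proper_folner TYPE('a)"
  shows "\<exists>e0::'a. minimal_projection e0"
proof -
  interpret invs using assms(1) by unfold_locales
  obtain \<epsilon>0 :: real and \<F>0 :: "'a set" and A0 :: "'a set" where
    ep: "\<epsilon>0 > 0" and fF: "finite \<F>0" and fA: "finite A0" and
    H0: "\<forall>F. \<not> (finite F \<and> F \<noteq> {} \<and> A0 \<subseteq> F \<and>
        (\<forall>s\<in>\<F>0. real (card ((\<lambda>x. s * x) ` F \<union> F)) \<le> (1 + \<epsilon>0) * real (card F)))"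
    using assms(4) unfolding proper_folner_def not_all not_imp not_ex by blast
  have H: "\<And>F. finite F \<Longrightarrow> F \<noteq> {} \<Longrightarrow> A0 \<subseteq> F \<Longrightarrow>
          \<exists>s\<in>\<F>0. real (card ((\<lambda>x. s * x) ` F \<union> F)) > (1 + \<epsilon>0) * real (card F)"
  proof -
    fix F :: "'a set" assume a: "finite F" "F \<noteq> {}" "A0 \<subseteq> F"
    have "\<not> (finite F \<and> F \<noteq> {} \<and> A0 \<subseteq> F \<and>
        (\<forall>s\<in>\<F>0. real (card ((\<lambda>x. s * x) ` F \<union> F)) \<le> (1 + \<epsilon>0) * real (card F)))"
      using H0 by (rule allE)
    with a have "\<not> (\<forall>s\<in>\<F>0. real (card ((\<lambda>x. s * x) ` F \<union> F)) \<le> (1 + \<epsilon>0) * real (card F))"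
      by simp
    then show "\<exists>s\<in>\<F>0. real (card ((\<lambda>x. s * x) ` F \<union> F)) > (1 + \<epsilon>0) * real (card F)"
      by (simp add: not_le)
  qed
  define K where "K = card A0"
  define inv0 where "inv0 V \<longleftrightarrow> (\<forall>s\<in>\<F>0. (\<lambda>x. s * x) ` V \<subseteq> V)" for V :: "'a set"
  have bound: "\<epsilon>0 * real (card V) \<le> real K" if V: "finite V" "inv0 V" for V
  proof (cases "V \<union> A0 = {}")
    case True then show ?thesis by simp
  next
    case False
    define G where "G = V \<union> A0"
    have fG: "finite G" using V fA G_def by simp
    obtain s where s: "s \<in> \<F>0" and gt: "real (card ((\<lambda>x. s * x) ` G \<union> G)) > (1 + \<epsilon>0) * real (card G)"
      using H[OF fG] False G_def by auto
    have sub: "(\<lambda>x. s * x) ` G \<union> G \<subseteq> G \<union> (\<lambda>x. s * x) ` A0"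
      using V(2) s unfolding inv0_def G_def by auto
    have "card ((\<lambda>x. s * x) ` G \<union> G) \<le> card (G \<union> (\<lambda>x. s * x) ` A0)"
      by (rule card_mono) (use fG fA sub in auto)
    also have "\<dots> \<le> card G + card ((\<lambda>x. s * x) ` A0)" by (rule card_Un_le)
    also have "\<dots> \<le> card G + K" using card_image_le[OF fA] K_def by simp
    finally have "real (card ((\<lambda>x. s * x) ` G \<union> G)) \<le> real (card G) + real K" by linarith
    with gt have "\<epsilon>0 * real (card G) < real K" by (simp add: algebra_simps)
    moreover have "card V \<le> card G" using fG G_def by (simp add: card_mono)
    ultimately show ?thesis using ep
      by (smt (verit) mult_left_mono of_nat_le_iff)
  qed
  define \<delta> where "\<delta> = \<epsilon>0 / (4 * real K + 4)"
  have dpos: "\<delta> > 0" using ep by (simp add: \<delta>_def)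
  obtain F where fF1: "finite F" and neF: "F \<noteq> {}" and
    FF: "\<And>s. s \<in> \<F>0 \<Longrightarrow> real (card ((\<lambda>x. s * x) ` F \<union> F)) \<le> (1 + \<delta>) * real (card F)"
    using assms(3)[unfolded folner_def, rule_format, OF dpos fF] by blast
  have dc: "\<delta> * real (card F) < 1"
  proof -
    define G where "G = F \<union> A0"
    have fG: "finite G" using fF1 fA G_def by simp
    obtain s where s: "s \<in> \<F>0" and gt: "real (card ((\<lambda>x. s * x) ` G \<union> G)) > (1 + \<epsilon>0) * real (card G)"
      using H[OF fG] neF G_def by auto
    define P1 where "P1 = (\<lambda>x. s * x) ` F \<union> F"
    define P2 where "P2 = (\<lambda>x. s * x) ` A0 \<union> A0"
    have sub: "(\<lambda>x. s * x) ` G \<union> G \<subseteq> P1 \<union> P2"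
      unfolding G_def P1_def P2_def by auto
    have c1: "card ((\<lambda>x. s * x) ` G \<union> G) \<le> card (P1 \<union> P2)"
      by (rule card_mono) (use fF1 fA sub in \<open>simp add: P1_def P2_def\<close>, rule sub)
    have c2: "card (P1 \<union> P2) \<le> card P1 + card P2" by (rule card_Un_le)
    have c3: "card P2 \<le> card ((\<lambda>x. s * x) ` A0) + card A0" unfolding P2_def by (rule card_Un_le)
    have c4: "card ((\<lambda>x. s * x) ` A0) \<le> K" using card_image_le[OF fA] K_def by simp
    have c5: "real (card ((\<lambda>x. s * x) ` G \<union> G)) \<le> real (card P1) + 2 * real K"
      using c1 c2 c3 c4 K_def by linarith
    have c6: "card F \<le> card G" using fG G_def by (simp add: card_mono)
    have c7: "(1 + \<epsilon>0) * real (card F) \<le> (1 + \<epsilon>0) * real (card G)"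
      using c6 ep by (intro mult_left_mono) auto
    have c8: "real (card P1) \<le> (1 + \<delta>) * real (card F)" using FF[OF s] P1_def by simp
    have "(1 + \<epsilon>0) * real (card F) < (1 + \<delta>) * real (card F) + 2 * real K"
      using gt c5 c7 c8 by linarith
    then have c9: "\<epsilon>0 * real (card F) < \<delta> * real (card F) + 2 * real K" by (simp add: distrib_right)
    have e: "\<epsilon>0 = \<delta> * (4 * real K + 4)" unfolding \<delta>_def by simp
    have "\<delta> * real (card F) * (4 * real K + 4) < \<delta> * real (card F) + 2 * real K"
      using c9 unfolding e by (simp add: mult_ac)
    then have "\<delta> * real (card F) * (4 * real K + 3) < 2 * real K"
      by (simp add: distrib_left)
    also have "\<dots> < 1 * (4 * real K + 3)" by simp
    finally show ?thesis by (rule mult_right_less_imp_less) simp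
  qed
  have Finv: "inv0 F"
    unfolding inv0_def
  proof
    fix s assume s: "s \<in> \<F>0"
    have "real (card ((\<lambda>x. s * x) ` F \<union> F)) < real (card F) + 1"
      using FF[OF s] dc by (simp add: algebra_simps)
    then have le: "card ((\<lambda>x. s * x) ` F \<union> F) \<le> card F" by linarith
    have "(\<lambda>x. s * x) ` F \<union> F = F"
      by (rule card_subset_eq[symmetric]) (use le fF1 in \<open>auto intro: antisym card_mono\<close>)
    then show "(\<lambda>x. s * x) ` F \<subseteq> F" by blast
  qed
  define P where "P V \<longleftrightarrow> finite V \<and> inv0 V" for V
  have "\<exists>V. P V \<and> (\<forall>W. P W \<longrightarrow> card W \<le> card V)"
  proof (rule ex_has_greatest_nat[where b = "Suc (nat \<lceil>real K / \<epsilon>0\<rceil>)"])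
    show "P F" using fF1 Finv P_def by simp
    show "\<forall>y. P y \<longrightarrow> card y < Suc (nat \<lceil>real K / \<epsilon>0\<rceil>)"
    proof (intro allI impI)
      fix y assume "P y"
      then have "\<epsilon>0 * real (card y) \<le> real K" using bound P_def by simp
      then have "real (card y) \<le> real K / \<epsilon>0" using ep by (simp add: field_simps)
      then have "card y \<le> nat \<lceil>real K / \<epsilon>0\<rceil>" by linarith
      then show "card y < Suc (nat \<lceil>real K / \<epsilon>0\<rceil>)" by simp
    qed
  qed
  then obtain V0 where PV0: "P V0" and maxV: "\<And>W. P W \<Longrightarrow> card W \<le> card V0" by blast
  have fV0: "finite V0" using PV0 P_def by simp
  have neV0: "V0 \<noteq> {}"
  proof
    assume "V0 = {}"
    then have "card F \<le> 0" using maxV[of F] fF1 Finv P_def by simp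
    then show False using fF1 neF by simp
  qed
  have rid: "x * t \<in> V0" if xV: "x \<in> V0" for x t
  proof -
    define W where "W = V0 \<union> (\<lambda>y. y * t) ` V0"
    have fW: "finite W" using fV0 W_def by simp
    have iW: "inv0 W" unfolding inv0_def
    proof (intro ballI subsetI)
      fix s z assume s: "s \<in> \<F>0" and z: "z \<in> (\<lambda>x. s * x) ` W"
      have iV: "s * y \<in> V0" if "y \<in> V0" for y using PV0 s that unfolding P_def inv0_def by blast
      from z obtain w where w: "w \<in> W" and zw: "z = s * w" by blast
      show "z \<in> W"
      proof (cases "w \<in> V0")
        case True then show ?thesis using iV zw W_def by blast
      next
        case False
        then obtain y where y: "y \<in> V0" and wy: "w = y * t" using w W_def by blast
        have "z = (s * y) * t" using zw wy by (simp add: mult.assoc)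
        then show ?thesis using iV[OF y] W_def by blast
      qed
    qed
    have "card W \<le> card V0" using maxV fW iW P_def by blast
    moreover have "V0 \<subseteq> W" unfolding W_def by blast
    ultimately have "W = V0" using card_subset_eq[OF fW] by (metis antisym card_mono fW)
    then show ?thesis using xV unfolding W_def by blast
  qed
  define X where "X = projections TYPE('a) \<inter> V0"
  have fX: "finite X" using fV0 X_def by simp
  obtain x0 where "x0 \<in> V0" using neV0 by blast
  then have "x0 * star x0 \<in> V0" by (rule rid)
  moreover have "x0 * star x0 = star (star x0) * star x0" by (simp add: star_star)
  ultimately obtain p0 where p0: "p0 \<in> X" unfolding X_def projections_def by blast
  define D where "D e = {g \<in> X. proj_le g e}" for e
  obtain e0 where e0X: "e0 \<in> X" and mine: "\<And>e. e \<in> X \<Longrightarrow> card (D e0) \<le> card (D e)"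
    using ex_has_least_nat[where P = "\<lambda>e. e \<in> X" and m = "\<lambda>e. card (D e)", OF p0] by blast
  have e0P: "e0 \<in> projections TYPE('a)" and e0V: "e0 \<in> V0" using e0X X_def by auto
  have e0i: "e0 * e0 = e0" using proj_idem[OF e0P] .
  have "minimal_projection e0"
    unfolding minimal_projection_def
  proof (intro conjI ballI impI)
    show "e0 \<in> projections TYPE('a)" by (rule e0P)
    fix f assume fP: "f \<in> projections TYPE('a)" and le: "proj_le f e0"
    have fi: "f * f = f" using proj_idem[OF fP] .
    have fe: "f * e0 = f" using le unfolding proj_le_def .
    have com: "e0 * f = f * e0" using idem_comm[OF e0i fi] .
    have fV: "f \<in> V0" using rid[OF e0V, of f] com fe by simp
    have fX': "f \<in> X" using fP fV X_def by simp
    have sub: "D f \<subseteq> D e0"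
    proof
      fix g assume "g \<in> D f"
      then have gX: "g \<in> X" and gf: "g * f = g" unfolding D_def proj_le_def by auto
      have "g * e0 = g * f * e0" using gf by simp
      also have "\<dots> = g * (f * e0)" by (simp add: mult.assoc)
      also have "\<dots> = g" using fe gf by simp
      finally show "g \<in> D e0" using gX unfolding D_def proj_le_def by simp
    qed
    have fD: "finite (D e0)" using fX unfolding D_def by simp
    have "D f = D e0" using card_subset_eq[OF fD sub] mine[OF fX'] card_mono[OF fD sub] by simp
    moreover have "e0 \<in> D e0" using e0X e0i unfolding D_def proj_le_def by simp
    ultimately have "e0 \<in> D f" by simp
    then have "e0 * f = e0" unfolding D_def proj_le_def by simp
    then show "f = e0" using com fe by simp
  qed
  then show ?thesis by blast
qed

end
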